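(* Let $F$ be a finite non-abelian group and let $L=F\wr\mathbb{Z}=\left(\bigoplus_{i\in\mathbb{Z}}F\right)\rtimes\mathbb{Z}$, where $\mathbb{Z}$ acts by shifting coordinates. Then $L$ does not embed (as a subgroup) in $\mathrm{IET}$.
   Context: $\mathrm{IET}$ denotes the group of interval exchange transformations of $[0,1)$: bijections of $[0,1)$ that are orientation-preserving piecewise isometries (piecewise translations), left-continuous, with finitely many discontinuity points. *)

theory Defs
  imports "HOL-Analysis.Analysis" "HOL-Algebra.Algebra"
begin

text \<open>Interval exchange transformations of [0,1): bijections of [0,1) that are
  piecewise translations with finitely many pieces (breakpoints a 0 = 0 < ... < a n = 1),
  left-continuous on (0,1). As functions on the reals, they are normalized to be
  the identity outside [0,1), so that the group operation is composition with unit id.\<close>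
definition iet_map :: "(real \<Rightarrow> real) \<Rightarrow> bool" where
  "iet_map f \<longleftrightarrow>
     bij_betw f {0..<1} {0..<1} \<and>
     (\<forall>x. x \<notin> {0..<1} \<longrightarrow> f x = x) \<and>
     (\<exists>(n::nat) (a::nat \<Rightarrow> real) (t::nat \<Rightarrow> real).
        a 0 = 0 \<and> a n = 1 \<and> (\<forall>i<n. a i < a (Suc i)) \<and>
        (\<forall>i<n. \<forall>x\<in>{a i<..<a (Suc i)}. f x = x + t i)) \<and>
     (\<forall>x\<in>{0<..<1}. (f \<longlongrightarrow> f x) (at_left x))"

definition IET :: "(real \<Rightarrow> real) monoid" where
  "IET = \<lparr>carrier = {f. iet_map f}, mult = (\<circ>), one = id\<rparr>"

definition wreath_Z :: "('a, 'b) monoid_scheme \<Rightarrow> ((int \<Rightarrow> 'a) \<times> int) monoid" where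
  "wreath_Z F = \<lparr>carrier = {(g, m). (\<forall>i. g i \<in> carrier F) \<and> finite {i. g i \<noteq> \<one>\<^bsub>F\<^esub>}},
     mult = (\<lambda>(g, m) (h, n). (\<lambda>i. g i \<otimes>\<^bsub>F\<^esub> h (i - m), m + n)),
     one = (\<lambda>i. \<one>\<^bsub>F\<^esub>, 0)\<rparr>"

end

theory Submission
  imports Defs "HOL-Real_Asymp.Real_Asymp"
begin


lemma sorted_cover:
  fixes a :: "nat \<Rightarrow> real"
  assumes "a 0 = 0" "\<forall>i<n. a i < a (Suc i)"
  shows "m \<le> n \<Longrightarrow> 0 \<le> y \<Longrightarrow> y < a m \<Longrightarrow> \<exists>i<m. a i \<le> y \<and> y < a (Suc i)"
proof (induction m)
  case 0 then show ?case using assms by simp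
next
  case (Suc m)
  show ?case
  proof (cases "y < a m")
    case True then show ?thesis using Suc by (metis less_Suc_eq Suc_leD)
  next
    case False then show ?thesis using Suc by (intro exI[of _ m]) auto
  qed
qed

lemma sorted_mono:
  fixes a :: "nat \<Rightarrow> real"
  assumes "\<forall>i<n. a i < a (Suc i)"
  shows "i \<le> j \<Longrightarrow> j \<le> n \<Longrightarrow> a i \<le> a j"
proof (induction j)
  case 0 then show ?case by simp
next
  case (Suc j)
  show ?case
  proof (cases "i = Suc j")
    case True then show ?thesis by simp
  next
    case False
    then have "i \<le> j" "j \<le> n" "j < n" using Suc.prems by auto
    then have "a i \<le> a j" "a j < a (Suc j)" using Suc.IH assms by auto
    then show ?thesis by simp
  qed
qed

lemma iet_inj:
  assumes "iet_map f" shows "inj f"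
proof (rule injI)
  fix x y assume e: "f x = f y"
  have b: "bij_betw f {0..<1} {0..<1}" and o: "\<forall>x. x \<notin> {0..<1} \<longrightarrow> f x = x"
    using assms unfolding iet_map_def by auto
  have im: "z \<in> {0..<1} \<Longrightarrow> f z \<in> {0..<1}" for z using b bij_betwE by blast
  show "x = y"
  proof (cases "x \<in> {0..<1}")
    case True
    then show ?thesis
    proof (cases "y \<in> {0..<1}")
      case True
      then show ?thesis using \<open>x \<in> _\<close> e b by (metis bij_betw_imp_inj_on inj_onD)
    next
      case False then show ?thesis using im[OF True] o e by metis
    qed
  next
    case False then show ?thesis using im o e by metis
  qed
qed

lemma iet_disp_finite:
  assumes "iet_map f" shows "finite (range (\<lambda>y. f y - y))"
proof -
  obtain n a t where a0: "a 0 = 0" and an: "a n = 1" and inc: "\<forall>i<n. a i < a (Suc i)"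
    and tr: "\<forall>i<n. \<forall>x\<in>{a i<..<a (Suc i)}. f x = x + t i"
    using assms unfolding iet_map_def by blast
  have o: "\<forall>x. x \<notin> {0..<1} \<longrightarrow> f x = x" using assms unfolding iet_map_def by auto
  have "range (\<lambda>y. f y - y) \<subseteq> {0} \<union> t ` {..<n} \<union> (\<lambda>i. f (a i) - a i) ` {..n}"
  proof
    fix z assume "z \<in> range (\<lambda>y. f y - y)"
    then obtain y where z: "z = f y - y" by auto
    show "z \<in> {0} \<union> t ` {..<n} \<union> (\<lambda>i. f (a i) - a i) ` {..n}"
    proof (cases "y \<in> {0..<1}")
      case False then show ?thesis using o z by auto
    next
      case True
      then obtain i where i: "i < n" "a i \<le> y" "y < a (Suc i)"
        using sorted_cover[OF a0 inc, of n y] an by auto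
      show ?thesis
      proof (cases "a i < y")
        case True
        then have "f y = y + t i" using tr i by auto
        then show ?thesis using z i by auto
      next
        case False
        then have "y = a i" using i by auto
        then show ?thesis using z i by auto
      qed
    qed
  qed
  then show ?thesis by (rule finite_subset) auto
qed

lemma iet_nonid:
  assumes "iet_map s" "s \<noteq> id"
  shows "\<exists>p q. 0 \<le> p \<and> p < q \<and> q \<le> 1 \<and> (\<forall>y\<in>{p<..<q}. s y \<noteq> y)"
proof (rule ccontr)
  assume H: "\<not> ?thesis"
  obtain n a t where a0: "a 0 = 0" and an: "a n = 1" and inc: "\<forall>i<n. a i < a (Suc i)"
    and tr: "\<forall>i<n. \<forall>x\<in>{a i<..<a (Suc i)}. s x = x + t i"
    using assms unfolding iet_map_def by blast
  have o: "\<forall>x. x \<notin> {0..<1} \<longrightarrow> s x = x" and b: "bij_betw s {0..<1} {0..<1}"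
    and lc: "\<forall>x\<in>{0<..<1}. (s \<longlongrightarrow> s x) (at_left x)"
    using assms unfolding iet_map_def by auto
  have piece: "s y = y" if "i < n" "a i < y" "y < a (Suc i)" for i y
  proof (rule ccontr)
    assume ne: "s y \<noteq> y"
    have "t i \<noteq> 0" using tr that ne by auto
    moreover have "0 \<le> a i" using sorted_mono[OF inc, of 0 i] a0 that by auto
    moreover have "a (Suc i) \<le> 1" using sorted_mono[OF inc, of "Suc i" n] an that by auto
    ultimately have "0 \<le> a i \<and> a i < a (Suc i) \<and> a (Suc i) \<le> 1 \<and> (\<forall>y\<in>{a i<..<a (Suc i)}. s y \<noteq> y)"
      using tr that by auto
    then show False using H by blast
  qed
  have mid: "s y = y" if "y \<in> {0<..<1}" for y
  proof -
    have "0 \<le> y" "y < a n" using that an by auto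
    then obtain i where i: "i < n" "a i \<le> y" "y < a (Suc i)"
      using sorted_cover[OF a0 inc, of n y] by auto
    show ?thesis
    proof (cases "a i < y")
      case True then show ?thesis using piece i by auto
    next
      case False
      then have yi: "y = a i" using i by auto
      then have "i \<noteq> 0" using a0 that by (metis greaterThanLessThan_iff less_irrefl)
      then obtain k where k: "i = Suc k" by (cases i) auto
      have "a k < y" using inc i k yi by auto
      then have ev: "eventually (\<lambda>z. z \<in> {a k<..<y}) (at_left y)"
        using eventually_at_left_real by blast
      have "eventually (\<lambda>z. z = s z) (at_left y)"
        proof (rule eventually_mono[OF ev])
        fix z assume "z \<in> {a k<..<y}"
        then show "z = s z" using piece[of k z] k i yi by auto
      qed
      then have "((\<lambda>z. z) \<longlongrightarrow> y) (at_left y) = (s \<longlongrightarrow> y) (at_left y)"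
        by (rule tendsto_cong)
      then have "(s \<longlongrightarrow> y) (at_left y)" using tendsto_ident_at by auto
      moreover have "(s \<longlongrightarrow> s y) (at_left y)" using lc that by auto
      ultimately show ?thesis using tendsto_unique[OF trivial_limit_at_left_real] by blast
    qed
  qed
  have zero: "s 0 = 0"
  proof (rule ccontr)
    assume ne: "s 0 \<noteq> 0"
    have "s 0 \<in> {0..<1}" using b bij_betwE by fastforce
    then have "s 0 \<in> {0<..<1}" using ne by auto
    then have "s (s 0) = s 0" using mid by auto
    then have "s 0 = 0" using iet_inj[OF assms(1)] by (auto dest: injD)
    then show False using ne by simp
  qed
  have "s = id"
  proof
    fix y show "s y = id y"
      proof (cases "y \<in> {0<..<1}")
      case True then show ?thesis using mid by simp
    next
      case False
      then have "y \<notin> {0..<1} \<or> y = 0" by auto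
      then show ?thesis using o zero by auto
    qed
  qed
  then show False using assms by simp
qed



lemma emeasure_Ioo_gen: "emeasure lborel {l<..<u::real} = ennreal (u - l)"
proof (cases "l \<le> u")
  case True then show ?thesis by simp
next
  case False then show ?thesis by (simp add: ennreal_neg)
qed

lemma image_add_Ioo: "(\<lambda>x. x + t) ` {l<..<u::real} = {l+t<..<u+t}"
proof
  show "(\<lambda>x. x + t) ` {l<..<u} \<subseteq> {l + t<..<u + t}" by auto
next
  show "{l + t<..<u + t} \<subseteq> (\<lambda>x. x + t) ` {l<..<u}"
  proof
    fix y assume "y \<in> {l + t<..<u + t}"
    then have "y - t \<in> {l<..<u}" "y = (y - t) + t" by auto
    then show "y \<in> (\<lambda>x. x + t) ` {l<..<u}" by blast
  qed
qed

lemma iet_meas: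
  assumes "iet_map g" "0 \<le> p" "p < q" "q \<le> 1"
  shows "\<exists>B. B \<in> sets lborel \<and> B \<subseteq> {0..<1} \<and> (\<forall>x\<in>B. g x \<in> {p<..<q}) \<and>
             ennreal (q - p) \<le> emeasure lborel B"
proof -
  obtain n a t where a0: "a 0 = 0" and an: "a n = 1" and inc: "\<forall>i<n. a i < a (Suc i)"
    and tr: "\<forall>i<n. \<forall>x\<in>{a i<..<a (Suc i)}. g x = x + t i"
    using assms unfolding iet_map_def by blast
  have bij: "bij_betw g {0..<1} {0..<1}" using assms unfolding iet_map_def by auto
  define P where "P i = {max (a i) (p - t i) <..< min (a (Suc i)) (q - t i)}" for i
  define B where "B = (\<Union>i<n. P i)"
  have Pmeas: "P i \<in> sets lborel" for i unfolding P_def by simp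
  have Bmeas: "B \<in> sets lborel" unfolding B_def using Pmeas by auto
  have Bsub: "B \<subseteq> {0..<1}"
  proof
    fix x assume "x \<in> B"
    then obtain i where i: "i < n" "x \<in> P i" unfolding B_def by auto
    have "0 \<le> a i" using sorted_mono[OF inc, of 0 i] a0 i by auto
    moreover have "a (Suc i) \<le> 1" using sorted_mono[OF inc, of "Suc i" n] an i by auto
    ultimately show "x \<in> {0..<1}" using i unfolding P_def by auto
  qed
  have Bmap: "\<forall>x\<in>B. g x \<in> {p<..<q}"
  proof
    fix x assume "x \<in> B"
    then obtain i where i: "i < n" "x \<in> P i" unfolding B_def by auto
    then have "g x = x + t i" using tr unfolding P_def by auto
    then show "g x \<in> {p<..<q}" using i unfolding P_def by auto
  qed
  have disj: "disjoint_family_on P {..<n}"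
    unfolding disjoint_family_on_def
  proof (intro ballI impI)
    fix i j assume ij: "i \<in> {..<n}" "j \<in> {..<n}" "i \<noteq> j"
    have aux: "P i \<inter> P j = {}" if "i < j" "j < n" for i j
    proof -
      have "a (Suc i) \<le> a j" using sorted_mono[OF inc, of "Suc i" j] that by auto
      then show ?thesis unfolding P_def by auto
    qed
    show "P i \<inter> P j = {}"
    proof (cases "i < j")
      case True then show ?thesis using aux ij by auto
    next
      case False then have "j < i" using ij by auto
      then show ?thesis using aux[of j i] ij by auto
    qed
  qed
  define Q where "Q i = (\<lambda>x. x + t i) ` P i" for i
  have Qeq: "Q i = {max (a i) (p - t i) + t i <..< min (a (Suc i)) (q - t i) + t i}" for i
    unfolding Q_def P_def by (rule image_add_Ioo)
  have Qmeas: "Q i \<in> sets lborel" for i unfolding Qeq by simp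
  have QP: "emeasure lborel (Q i) = emeasure lborel (P i)" for i
    unfolding Qeq P_def emeasure_Ioo_gen by simp
  define Fin where "Fin = g ` a ` {..n}"
  have Finmeas: "Fin \<in> sets lborel"
    unfolding Fin_def sets_lborel by (intro borel_closed finite_imp_closed) auto
  have Fin0: "emeasure lborel Fin = 0"
    unfolding Fin_def by (auto intro!: emeasure_lborel_countable countable_finite)
  have cover: "{p<..<q} \<subseteq> (\<Union>i<n. Q i) \<union> Fin"
  proof
    fix y assume y: "y \<in> {p<..<q}"
    then have "y \<in> {0..<1}" using assms by auto
    then obtain x where x: "x \<in> {0..<1}" "y = g x" using bij by (metis bij_betw_iff_bijections)
    have "0 \<le> x" "x < a n" using x an by auto
    then obtain i where i: "i < n" "a i \<le> x" "x < a (Suc i)"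
      using sorted_cover[OF a0 inc, of n x] by auto
    show "y \<in> (\<Union>i<n. Q i) \<union> Fin"
    proof (cases "a i < x")
      case True
      then have gx: "g x = x + t i" using tr i by auto
      then have "x \<in> P i" using True i y x unfolding P_def by auto
      then have "y \<in> Q i" unfolding Q_def using gx x by auto
      then show ?thesis using i by auto
    next
      case False
      then have "x = a i" using i by auto
      then have "y \<in> Fin" unfolding Fin_def using x i by auto
      then show ?thesis by auto
    qed
  qed
  have "ennreal (q - p) = emeasure lborel {p<..<q}" using assms by simp
  also have "\<dots> \<le> emeasure lborel ((\<Union>i<n. Q i) \<union> Fin)"
    by (rule emeasure_mono[OF cover]) (use Qmeas Finmeas in auto)
  also have "\<dots> \<le> emeasure lborel (\<Union>i<n. Q i) + emeasure lborel Fin"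
    by (rule emeasure_subadditive) (use Qmeas Finmeas in auto)
  also have "\<dots> = emeasure lborel (\<Union>i<n. Q i)" using Fin0 by simp
  also have "\<dots> \<le> (\<Sum>i<n. emeasure lborel (Q i))"
    by (rule emeasure_subadditive_finite) (use Qmeas in auto)
  also have "\<dots> = (\<Sum>i<n. emeasure lborel (P i))" using QP by simp
  also have "\<dots> = emeasure lborel B"
    unfolding B_def by (rule sum_emeasure) (use Pmeas disj in auto)
  finally show ?thesis using Bmeas Bsub Bmap by blast
qed

lemma averaging:
  fixes B :: "nat \<Rightarrow> real set"
  assumes meas: "\<And>n. B n \<in> sets lborel" and sub: "\<And>n. B n \<subseteq> {0..<1}"
    and big: "\<And>n. ennreal c \<le> emeasure lborel (B n)" and kc: "real k < real N * c"
  shows "\<exists>x. k < card {n. n < N \<and> x \<in> B n}"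
proof (rule ccontr)
  assume "\<not> ?thesis"
  then have le: "card {n. n < N \<and> x \<in> B n} \<le> k" for x by (meson not_less)
  have c0: "0 \<le> c"
  proof (rule ccontr)
    assume "\<not> 0 \<le> c"
    then have "real N * c \<le> 0" by (simp add: mult_nonneg_nonpos)
    then show False using kc by simp
  qed
  have pt: "(\<Sum>n<N. indicator (B n) x) = (of_nat (card {n. n < N \<and> x \<in> B n}) :: ennreal)" for x
  proof -
    have "(\<Sum>n<N. indicator (B n) x) = (\<Sum>n\<in>{..<N}. if x \<in> B n then 1 else (0::ennreal))"
      by (rule sum.cong) (auto simp: indicator_def)
    also have "\<dots> = of_nat (card ({..<N} \<inter> {n. x \<in> B n}))" by (subst sum.If_cases) simp_all
    also have "{..<N} \<inter> {n. x \<in> B n} = {n. n < N \<and> x \<in> B n}" by auto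
    finally show ?thesis .
  qed
  have "ennreal (real N * c) = (\<Sum>n<N. ennreal c)"
    by (simp add: ennreal_mult' ennreal_of_nat_eq_real_of_nat c0)
  also have "\<dots> \<le> (\<Sum>n<N. emeasure lborel (B n))" by (rule sum_mono) (use big in auto)
  also have "\<dots> = (\<integral>\<^sup>+x. (\<Sum>n<N. indicator (B n) x) \<partial>lborel)"
    by (subst nn_integral_sum) (use meas in auto)
  also have "\<dots> \<le> (\<integral>\<^sup>+x. of_nat k * indicator {0..<1::real} x \<partial>lborel)"
  proof (rule nn_integral_mono)
    fix x :: real
    show "(\<Sum>n<N. indicator (B n) x) \<le> (of_nat k * indicator {0..<1} x :: ennreal)"
    proof (cases "x \<in> {0..<1}")
      case True
      have "(\<Sum>n<N. indicator (B n) x) = (of_nat (card {n. n < N \<and> x \<in> B n}) :: ennreal)" by (rule pt)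
      also have "\<dots> \<le> of_nat k" using le[of x] by simp
      finally show ?thesis using True by simp
    next
      case False
      then have "{n. n < N \<and> x \<in> B n} = {}" using sub by blast
      have "(\<Sum>n<N. indicator (B n) x) = (of_nat (card {n. n < N \<and> x \<in> B n}) :: ennreal)" by (rule pt)
      also have "\<dots> = 0" using \<open>{n. n < N \<and> x \<in> B n} = {}\<close> by simp
      finally show ?thesis by simp
    qed
  qed
  also have "\<dots> = of_nat k" by (simp add: nn_integral_cmult_indicator)
  finally have "ennreal (real N * c) \<le> ennreal (real k)" by (simp add: ennreal_of_nat_eq_real_of_nat)
  then have "real N * c \<le> real k" by (simp add: ennreal_le_iff)
  then show False using kc by simp
qed



locale emb = group F for F :: "('a, 'b) monoid_scheme" (structure) +
  fixes phi :: "((int \<Rightarrow> 'a) \<times> int) \<Rightarrow> real \<Rightarrow> real"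
  assumes hom: "phi \<in> hom (wreath_Z F) IET"
    and inj: "inj_on phi (carrier (wreath_Z F))"
    and finK: "finite (carrier F)"
begin

lemma carrierW: "carrier (wreath_Z F) = {(g, m). (\<forall>i. g i \<in> carrier F) \<and> finite {i. g i \<noteq> \<one>}}"
  by (simp add: wreath_Z_def)

lemma mulW: "(g, m) \<otimes>\<^bsub>wreath_Z F\<^esub> (h, n) = (\<lambda>i. g i \<otimes> h (i - m), m + n)"
  by (simp add: wreath_Z_def)

lemma phi_mult: "x \<in> carrier (wreath_Z F) \<Longrightarrow> y \<in> carrier (wreath_Z F) \<Longrightarrow>
   phi (x \<otimes>\<^bsub>wreath_Z F\<^esub> y) = phi x \<circ> phi y"
  using hom unfolding hom_def by (simp add: IET_def)

lemma phi_iet: "x \<in> carrier (wreath_Z F) \<Longrightarrow> iet_map (phi x)"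
proof -
  assume "x \<in> carrier (wreath_Z F)"
  then have "phi x \<in> carrier IET" using hom unfolding hom_def by blast
  then show ?thesis by (simp add: IET_def)
qed

definition VJ :: "int set \<Rightarrow> (int \<Rightarrow> 'a) set" where
  "VJ J = {h. (\<forall>i. h i \<in> carrier F) \<and> (\<forall>i. i \<notin> J \<longrightarrow> h i = \<one>)}"

definition P :: "(int \<Rightarrow> 'a) \<Rightarrow> real \<Rightarrow> real" where
  "P h = phi (h, 0)"

definition Om :: "real \<Rightarrow> int set \<Rightarrow> real set" where
  "Om x J = (\<lambda>h. P h x) ` VJ J"

definition dl :: "int \<Rightarrow> 'a \<Rightarrow> int \<Rightarrow> 'a" where
  "dl m c = (\<lambda>i. if i = m then c else \<one>)"

lemma VJ_W: "finite J \<Longrightarrow> h \<in> VJ J \<Longrightarrow> (h, 0) \<in> carrier (wreath_Z F)"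
  unfolding VJ_def carrierW by (auto elim: finite_subset[rotated])

lemma VJ_mono: "J \<subseteq> J' \<Longrightarrow> VJ J \<subseteq> VJ J'"
  unfolding VJ_def by auto

lemma VJ_mult: "h \<in> VJ J \<Longrightarrow> h' \<in> VJ J \<Longrightarrow> (\<lambda>i. h i \<otimes> h' i) \<in> VJ J"
  unfolding VJ_def by auto

lemma VJ_one: "(\<lambda>i. \<one>) \<in> VJ J"
  unfolding VJ_def by auto

lemma dl_VJ: "c \<in> carrier F \<Longrightarrow> dl m c \<in> VJ {m}"
  unfolding VJ_def dl_def by auto

lemma P_mult: "finite J \<Longrightarrow> h \<in> VJ J \<Longrightarrow> h' \<in> VJ J \<Longrightarrow> P (\<lambda>i. h i \<otimes> h' i) y = P h (P h' y)"
proof -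
  assume a: "finite J" "h \<in> VJ J" "h' \<in> VJ J"
  have "(h, 0) \<otimes>\<^bsub>wreath_Z F\<^esub> (h', 0) = ((\<lambda>i. h i \<otimes> h' i), 0)" by (simp add: mulW)
  then show ?thesis using phi_mult[OF VJ_W[OF a(1,2)] VJ_W[OF a(1,3)]] unfolding P_def by simp
qed

lemma P_one: "P (\<lambda>i. \<one>) = id"
proof -
  have W: "((\<lambda>i. \<one>), 0) \<in> carrier (wreath_Z F)" using VJ_W[of "{}"] VJ_one by auto
  have "P (\<lambda>i. \<one>) (P (\<lambda>i. \<one>) y) = P (\<lambda>i. \<one>) y" for y
    using P_mult[of "{}" "\<lambda>i. \<one>" "\<lambda>i. \<one>" y] VJ_one by simp
  moreover have "inj (P (\<lambda>i. \<one>))" unfolding P_def by (rule iet_inj[OF phi_iet[OF W]])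
  ultimately show ?thesis by (auto simp: inj_def)
qed

lemma P_inj: "finite J \<Longrightarrow> h \<in> VJ J \<Longrightarrow> inj (P h)"
  unfolding P_def by (rule iet_inj[OF phi_iet[OF VJ_W]])

lemma P_comm:
  assumes "finite J" "finite J'" "h \<in> VJ J" "h' \<in> VJ J'" "J \<inter> J' = {}"
  shows "P h (P h' y) = P h' (P h y)"
proof -
  have h: "h \<in> VJ (J \<union> J')" "h' \<in> VJ (J \<union> J')" using assms VJ_mono by blast+
  have fin: "finite (J \<union> J')" using assms by auto
  have eq: "(\<lambda>i. h i \<otimes> h' i) = (\<lambda>i. h' i \<otimes> h i)"
  proof
    fix i
    have c: "h i \<in> carrier F" "h' i \<in> carrier F" using assms unfolding VJ_def by auto
    show "h i \<otimes> h' i = h' i \<otimes> h i"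
    proof (cases "i \<in> J")
      case True then have "h' i = \<one>" using assms unfolding VJ_def by auto
      then show ?thesis using c by simp
    next
      case False then have "h i = \<one>" using assms unfolding VJ_def by auto
      then show ?thesis using c by simp
    qed
  qed
  show ?thesis using P_mult[OF fin h(1) h(2)] P_mult[OF fin h(2) h(1)] eq by metis
qed

lemma P_inv:
  assumes "finite J" "h \<in> VJ J"
  shows "(\<lambda>i. inv (h i)) \<in> VJ J" "P (\<lambda>i. inv (h i)) (P h y) = y"
proof -
  show hi: "(\<lambda>i. inv (h i)) \<in> VJ J" using assms unfolding VJ_def by auto
  have "(\<lambda>i. inv (h i) \<otimes> h i) = (\<lambda>i. \<one>)" using assms unfolding VJ_def by auto
  then show "P (\<lambda>i. inv (h i)) (P h y) = y"
    using P_mult[OF assms(1) hi assms(2), of y] P_one by simp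
qed

lemma VJ_finite: "finite J \<Longrightarrow> finite (VJ J)"
proof -
  assume fJ: "finite J"
  have "VJ J \<subseteq> (\<lambda>f i. if i \<in> J then f i else \<one>) ` (PiE J (\<lambda>_. carrier F))"
  proof
    fix h assume h: "h \<in> VJ J"
    then have "h = (\<lambda>i. if i \<in> J then (restrict h J) i else \<one>)" unfolding VJ_def by auto
    moreover have "restrict h J \<in> PiE J (\<lambda>_. carrier F)" using h unfolding VJ_def by auto
    ultimately show "h \<in> (\<lambda>f i. if i \<in> J then f i else \<one>) ` (PiE J (\<lambda>_. carrier F))" by blast
  qed
  moreover have "finite (PiE J (\<lambda>_. carrier F))"
    using fJ finK by (intro finite_PiE) auto
  ultimately show ?thesis by (rule finite_subset[OF _ finite_imageI])
qed

end


context emb begin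

lemma Om_mono: "J \<subseteq> J' \<Longrightarrow> Om x J \<subseteq> Om x J'"
  unfolding Om_def using VJ_mono by blast

lemma Om_finite: "finite J \<Longrightarrow> finite (Om x J)"
  unfolding Om_def using VJ_finite by blast

lemma x_Om: "x \<in> Om x J"
proof -
  have "P (\<lambda>i. \<one>) x = x" using P_one by simp
  moreover have "P (\<lambda>i. \<one>) x \<in> Om x J" unfolding Om_def using VJ_one by (rule imageI)
  ultimately show ?thesis by simp
qed

lemma Om_card_pos: "finite J \<Longrightarrow> 1 \<le> card (Om x J)"
proof -
  assume "finite J"
  then have "finite (Om x J)" by (rule Om_finite)
  then have "card (Om x J) \<noteq> 0" using x_Om[of x J] by auto
  then show ?thesis by simp
qed

lemma dl_Om:
  assumes "finite J" "c \<in> carrier F"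
  shows "P (dl m c) ` Om x J \<subseteq> Om x (insert m J)"
proof
  fix z assume "z \<in> P (dl m c) ` Om x J"
  then obtain h where h: "h \<in> VJ J" "z = P (dl m c) (P h x)" unfolding Om_def by auto
  have fin: "finite (insert m J)" using assms by auto
  have a: "dl m c \<in> VJ (insert m J)" using dl_VJ[OF assms(2)] VJ_mono[of "{m}" "insert m J"] by auto
  have b: "h \<in> VJ (insert m J)" using h VJ_mono[of J "insert m J"] by auto
  have "z = P (\<lambda>i. dl m c i \<otimes> h i) x" using P_mult[OF fin a b] h by simp
  moreover have "(\<lambda>i. dl m c i \<otimes> h i) \<in> VJ (insert m J)" using VJ_mult[OF a b] .
  ultimately show "z \<in> Om x (insert m J)" unfolding Om_def by (rule rev_image_eqI[rotated])
qed

lemma Om_split: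
  assumes "finite J" "m \<notin> J"
  shows "Om x (insert m J) \<subseteq> (\<Union>c\<in>carrier F. P (dl m c) ` Om x J)"
proof
  fix z assume "z \<in> Om x (insert m J)"
  then obtain h where h: "h \<in> VJ (insert m J)" "z = P h x" unfolding Om_def by auto
  define h' where "h' = h(m := \<one>)"
  have hm: "h m \<in> carrier F" using h unfolding VJ_def by auto
  have h'J: "h' \<in> VJ J" using h unfolding VJ_def h'_def by auto
  have fin: "finite (insert m J)" using assms by auto
  have a: "dl m (h m) \<in> VJ (insert m J)" using dl_VJ[OF hm] VJ_mono[of "{m}" "insert m J"] by auto
  have b: "h' \<in> VJ (insert m J)" using h'J VJ_mono[of J "insert m J"] by auto
  have "(\<lambda>i. dl m (h m) i \<otimes> h' i) = h"
  proof
    fix i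
    have "h i \<in> carrier F" using h unfolding VJ_def by auto
    then show "dl m (h m) i \<otimes> h' i = h i" unfolding dl_def h'_def using hm by auto
  qed
  then have zeq: "z = P (dl m (h m)) (P h' x)" using P_mult[OF fin a b] h by simp
  then show "z \<in> (\<Union>c\<in>carrier F. P (dl m c) ` Om x J)"
  proof -
    have "P h' x \<in> Om x J" unfolding Om_def using h'J by (rule imageI)
    then have "z \<in> P (dl m (h m)) ` Om x J" using zeq by (rule rev_image_eqI)
    then show ?thesis using hm by (rule UN_I[rotated])
  qed
qed

lemma Dbl:
  assumes "finite J" "m \<notin> J" "c \<in> carrier F" "y \<in> Om x J" "P (dl m c) y \<in> Om x J"
  shows "P (dl m c) ` Om x J \<subseteq> Om x J"
proof
  fix z assume "z \<in> P (dl m c) ` Om x J"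
  then obtain w where w: "w \<in> VJ J" "z = P (dl m c) (P w x)" unfolding Om_def by auto
  obtain v where v: "v \<in> VJ J" "y = P v x" using assms unfolding Om_def by auto
  obtain v' where v': "v' \<in> VJ J" "P (dl m c) y = P v' x" using assms unfolding Om_def by auto
  have dm: "dl m c \<in> VJ {m}" using dl_VJ[OF assms(3)] .
  have disj: "{m} \<inter> J = {}" using assms by auto
  have com: "P (dl m c) (P u t) = P u (P (dl m c) t)" if "u \<in> VJ J" for u t
    using P_comm[OF _ assms(1) dm that disj] by simp
  have gx: "P (dl m c) x = P (\<lambda>i. inv (v i)) (P v' x)"
  proof -
    have "P (dl m c) x = P (\<lambda>i. inv (v i)) (P v (P (dl m c) x))"
      using P_inv[OF assms(1) v(1)] by simp
    also have "\<dots> = P (\<lambda>i. inv (v i)) (P v' x)" using com[OF v(1)] v v' by simp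
    finally show ?thesis .
  qed
  have vi: "(\<lambda>i. inv (v i)) \<in> VJ J" using P_inv[OF assms(1) v(1)] by simp
  have "z = P w (P (\<lambda>i. inv (v i)) (P v' x))" using w com gx by simp
  also have "\<dots> = P (\<lambda>i. w i \<otimes> (inv (v i) \<otimes> v' i)) x"
    using P_mult[OF assms(1) w(1) VJ_mult[OF vi v'(1)]] P_mult[OF assms(1) vi v'(1)] by simp
  finally show "z \<in> Om x J" unfolding Om_def using VJ_mult[OF w(1) VJ_mult[OF vi v'(1)]] by blast
qed

lemma Dbl2:
  assumes "finite J" "m \<notin> J" "c \<in> carrier F" "\<not> P (dl m c) ` Om x J \<subseteq> Om x J"
  shows "2 * card (Om x J) \<le> card (Om x (insert m J))"
proof -
  have disj: "P (dl m c) ` Om x J \<inter> Om x J = {}" using Dbl[OF assms(1-3)] assms(4) by blast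
  have injg: "inj (P (dl m c))" using P_inj[OF _ dl_VJ[OF assms(3)]] by simp
  have c1: "card (P (dl m c) ` Om x J) = card (Om x J)"
    using injg by (simp add: card_image inj_on_subset)
  have sub: "Om x J \<union> P (dl m c) ` Om x J \<subseteq> Om x (insert m J)"
    using Om_mono[of J "insert m J"] dl_Om[OF assms(1,3)] by auto
  have fin: "finite (Om x (insert m J))" using Om_finite assms by auto
  have "card (Om x J \<union> P (dl m c) ` Om x J) = card (Om x J) + card (P (dl m c) ` Om x J)"
    by (rule card_Un_disjoint) (use Om_finite assms disj in auto)
  then have "card (Om x J \<union> P (dl m c) ` Om x J) = 2 * card (Om x J)" using c1 by simp
  then show ?thesis using card_mono[OF fin sub] by simp
qed

lemma Om_close:
  assumes "finite R" "finite E0"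
    and "\<forall>m\<in>R. \<forall>c\<in>carrier F. P (dl m c) ` Om x E0 \<subseteq> Om x E0"
  shows "Om x (E0 \<union> R) \<subseteq> Om x E0"
  using assms(1,3)
proof (induction R rule: finite_induct)
  case empty then show ?case by simp
next
  case (insert m R)
  show ?case
  proof (cases "m \<in> E0 \<union> R")
    case True
    then have "E0 \<union> insert m R = E0 \<union> R" by auto
    then show ?thesis using insert by auto
  next
    case False
    have fin: "finite (E0 \<union> R)" using insert assms by auto
    have "Om x (E0 \<union> insert m R) = Om x (insert m (E0 \<union> R))" by simp
    also have "\<dots> \<subseteq> (\<Union>c\<in>carrier F. P (dl m c) ` Om x (E0 \<union> R))"
      by (rule Om_split[OF fin False])
    also have "\<dots> \<subseteq> (\<Union>c\<in>carrier F. P (dl m c) ` Om x E0)" using insert by blast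
    also have "\<dots> \<subseteq> Om x E0" using insert.prems by auto
    finally show ?thesis .
  qed
qed

lemma Dprime:
  assumes "finite E1" "E0 \<subseteq> E1"
  shows "Om x E1 = Om x E0 \<or> 2 * card (Om x E0) \<le> card (Om x E1)"
proof (cases "\<forall>m\<in>E1 - E0. \<forall>c\<in>carrier F. P (dl m c) ` Om x E0 \<subseteq> Om x E0")
  case True
  have f0: "finite E0" using assms finite_subset by blast
  have "Om x (E0 \<union> (E1 - E0)) \<subseteq> Om x E0" by (rule Om_close) (use True assms f0 in auto)
  moreover have "E0 \<union> (E1 - E0) = E1" using assms by auto
  ultimately have "Om x E1 = Om x E0" using Om_mono[OF assms(2)] by auto
  then show ?thesis by simp
next
  case False
  then obtain m c where mc: "m \<in> E1 - E0" "c \<in> carrier F" "\<not> P (dl m c) ` Om x E0 \<subseteq> Om x E0"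
    by blast
  have f0: "finite E0" using assms finite_subset by blast
  have "2 * card (Om x E0) \<le> card (Om x (insert m E0))" using Dbl2[OF f0 _ mc(2,3)] mc by auto
  also have "\<dots> \<le> card (Om x E1)"
    by (rule card_mono) (use Om_finite assms mc Om_mono in auto)
  finally show ?thesis by simp
qed

end


context emb begin

lemma comb:
  assumes fJ: "finite J" and fI: "finite I" and dis: "J \<inter> I = {}"
    and eq: "Om x (J \<union> I) = Om x J"
    and ab: "a \<in> carrier F" "b \<in> carrier F"
    and nc: "\<forall>m\<in>I. P (dl m a) (P (dl m b) x) \<noteq> P (dl m b) (P (dl m a) x)"
  shows "2 ^ card I \<le> card (Om x J)"
proof -
  have key: "finite I' \<Longrightarrow> I' \<subseteq> I \<Longrightarrow> 2 ^ card I' \<le> card (Om x I')" for I'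
  proof (induction I' rule: finite_induct)
    case empty then show ?case using Om_card_pos[of "{}" x] by simp
  next
    case (insert m I')
    have fI': "finite I'" and mI': "m \<notin> I'" and mI: "m \<in> I" and sub: "I' \<subseteq> I"
      using insert by auto
    have mJ: "m \<notin> J" using mI dis by auto
    have IH: "2 ^ card I' \<le> card (Om x I')" using insert sub by auto
    show ?case
    proof (cases "P (dl m a) ` Om x I' \<subseteq> Om x I' \<and> P (dl m b) ` Om x I' \<subseteq> Om x I'")
      case False
      then obtain c where c: "c \<in> carrier F" "\<not> P (dl m c) ` Om x I' \<subseteq> Om x I'"
        using ab by blast
      have "2 * card (Om x I') \<le> card (Om x (insert m I'))" by (rule Dbl2[OF fI' mI' c])
      then show ?thesis using IH fI' mI' by simp
    next
      case True
      have xI: "x \<in> Om x I'" by (rule x_Om)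
      obtain ra where ra: "ra \<in> VJ I'" "P (dl m a) x = P ra x"
        using True xI unfolding Om_def by blast
      obtain rb where rb: "rb \<in> VJ I'" "P (dl m b) x = P rb x"
        using True xI unfolding Om_def by blast
      have da: "dl m a \<in> VJ {m}" and db: "dl m b \<in> VJ {m}" using dl_VJ ab by auto
      have d1: "{m} \<inter> J = {}" using mJ by auto
      have d2: "J \<inter> I' = {}" using dis sub by auto
      have d3: "{m} \<inter> I' = {}" using mI' by auto
      have claim: "P (dl m b) y = P rb y" if yJ: "y \<in> Om x J" for y
      proof -
        obtain w where w: "w \<in> VJ J" "y = P w x" using yJ unfolding Om_def by auto
        have "P (dl m b) (P w x) = P w (P (dl m b) x)"
          by (rule P_comm[OF _ fJ db w(1) d1]) simp
        also have "\<dots> = P w (P rb x)" using rb by simp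
        also have "\<dots> = P rb (P w x)" by (rule P_comm[OF fJ fI' w(1) rb(1) d2])
        finally show ?thesis using w by simp
      qed
      have "ra \<in> VJ (J \<union> I)" using ra(1) VJ_mono[of I' "J \<union> I"] sub by auto
      then have "P ra x \<in> Om x (J \<union> I)" unfolding Om_def by (rule imageI)
      then have raJ: "P ra x \<in> Om x J" using eq by simp
      have "P (dl m a) (P (dl m b) x) = P (dl m a) (P rb x)" using rb by simp
      also have "\<dots> = P rb (P (dl m a) x)" by (rule P_comm[OF _ fI' da rb(1) d3]) simp
      also have "\<dots> = P rb (P ra x)" using ra by simp
      also have "\<dots> = P (dl m b) (P ra x)" using claim[OF raJ] by simp
      also have "\<dots> = P (dl m b) (P (dl m a) x)" using ra by simp
      finally show ?thesis using nc mI by blast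
    qed
  qed
  have "2 ^ card I \<le> card (Om x I)" using key[OF fI] by simp
  also have "\<dots> \<le> card (Om x J)"
  proof (rule card_mono)
    show "finite (Om x J)" using Om_finite[OF fJ] .
    show "Om x I \<subseteq> Om x J" using Om_mono[of I "J \<union> I" x] eq by auto
  qed
  finally show ?thesis .
qed

lemma growth:
  assumes ab: "a \<in> carrier F" "b \<in> carrier F"
    and nc: "\<forall>m\<in>G. P (dl m a) (P (dl m b) x) \<noteq> P (dl m b) (P (dl m a) x)"
  shows "finite E \<Longrightarrow> E \<subseteq> G \<Longrightarrow> j ^ 2 \<le> card E \<Longrightarrow> 2 ^ j \<le> card (Om x E)"
proof (induction j arbitrary: E)
  case 0 then show ?case using Om_card_pos[of E x] by simp
next
  case (Suc j)
  have "j ^ 2 \<le> (Suc j) ^ 2" by (simp add: power_mono)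
  then have "j ^ 2 \<le> card E" using Suc by linarith
  then obtain E0 where E0: "E0 \<subseteq> E" "card E0 = j ^ 2" "finite E0"
    by (rule obtain_subset_with_card_n)
  have IH: "2 ^ j \<le> card (Om x E0)" using Suc.IH[of E0] E0 Suc.prems by auto
  show ?case
  proof (rule ccontr)
    assume "\<not> ?case"
    then have lt: "card (Om x E) < 2 ^ Suc j" by simp
    have "Om x E = Om x E0"
      using Dprime[OF Suc.prems(1) E0(1), of x] IH lt by auto
    then have eqO: "Om x (E0 \<union> (E - E0)) = Om x E0" using E0(1) by (simp add: Un_absorb1 Un_Diff_cancel)
    have "2 ^ card (E - E0) \<le> card (Om x E0)"
      by (rule comb[OF E0(3) _ _ eqO ab]) (use Suc.prems nc in auto)
    also have "\<dots> = card (Om x E)" using \<open>Om x E = Om x E0\<close> by simp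
    finally have "(2::nat) ^ card (E - E0) < 2 ^ Suc j" using lt by simp
    then have "card (E - E0) < Suc j" by (rule power_less_imp_less_exp[rotated]) simp
    moreover have "card (E - E0) = card E - j ^ 2"
      using card_Diff_subset[OF E0(3,1)] E0 by simp
    moreover have "(Suc j) ^ 2 = j ^ 2 + 2 * j + 1" by (simp add: power2_eq_square)
    ultimately show False using Suc.prems(3) by linarith
  qed
qed

end


context emb begin

definition T :: "int \<Rightarrow> real \<Rightarrow> real" where
  "T n = phi (\<lambda>i. \<one>, n)"

lemma T_W: "(\<lambda>i. \<one>, n) \<in> carrier (wreath_Z F)"
  unfolding carrierW by auto

lemma T_iet: "iet_map (T n)"
  unfolding T_def by (rule phi_iet[OF T_W])

lemma T_mult: "T n (T m y) = T (n + m) y"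
proof -
  have "(\<lambda>i. \<one>, n) \<otimes>\<^bsub>wreath_Z F\<^esub> (\<lambda>i. \<one>, m) = (\<lambda>i. \<one>, n + m)" by (simp add: mulW)
  then have "phi (\<lambda>i. \<one>, n + m) = T n \<circ> T m" using phi_mult[OF T_W[of n] T_W[of m]] unfolding T_def by simp
  then show ?thesis unfolding T_def by simp
qed

lemma T_zero: "T 0 = id"
  using P_one unfolding T_def P_def by simp

lemma T_inv: "T (- n) (T n y) = y"
  using T_mult[of "-n" n y] T_zero by simp

lemma dl_W: "c \<in> carrier F \<Longrightarrow> (dl m c, k) \<in> carrier (wreath_Z F)"
proof -
  assume c: "c \<in> carrier F"
  have "{i. dl m c i \<noteq> \<one>} \<subseteq> {m}" unfolding dl_def by auto
  then have "finite {i. dl m c i \<noteq> \<one>}" by (rule finite_subset) simp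
  then show ?thesis unfolding carrierW dl_def using c by auto
qed

lemma P_conj:
  assumes c: "c \<in> carrier F"
  shows "P (dl n c) y = T n (P (dl 0 c) (T (- n) y))"
proof -
  have e1: "(\<lambda>i. \<one>, n) \<otimes>\<^bsub>wreath_Z F\<^esub> (dl 0 c, 0) = (dl n c, n)"
    using c by (auto simp: mulW dl_def)
  have e2: "(dl n c, n) \<otimes>\<^bsub>wreath_Z F\<^esub> (\<lambda>i. \<one>, - n) = (dl n c, 0)"
    using c by (auto simp: mulW dl_def)
  have "P (dl n c) = phi (dl n c, n) \<circ> T (- n)"
    using phi_mult[OF dl_W[OF c, of n n] T_W[of "-n"]] e2 unfolding P_def T_def by simp
  moreover have "phi (dl n c, n) = T n \<circ> P (dl 0 c)"
    using phi_mult[OF T_W[of n] dl_W[OF c, of 0 0]] e1 unfolding P_def T_def by simp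
  ultimately have "P (dl n c) y = T n (P (dl 0 c) (T (- n) y))" by simp
  then show ?thesis .
qed

lemma P_dl_mult:
  assumes "c \<in> carrier F" "d \<in> carrier F"
  shows "P (dl m c) (P (dl m d) y) = P (dl m (c \<otimes> d)) y"
proof -
  have "(\<lambda>i. dl m c i \<otimes> dl m d i) = dl m (c \<otimes> d)" unfolding dl_def using assms by auto
  then show ?thesis using P_mult[of "{m}" "dl m c" "dl m d" y] dl_VJ assms by simp
qed

definition Dset :: "real set" where
  "Dset = (\<Union>c\<in>carrier F. range (\<lambda>y. P (dl 0 c) y - y)) \<union> range (\<lambda>y. T 1 y - y)
     \<union> range (\<lambda>y. T (-1) y - y)"

lemma Dset_finite: "finite Dset"
proof -
  have f1: "finite (range (\<lambda>y. P (dl 0 c) y - y))" if "c \<in> carrier F" for c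
    unfolding P_def by (rule iet_disp_finite[OF phi_iet[OF dl_W[OF that]]])
  have f2: "finite (range (\<lambda>y. T n y - y))" for n by (rule iet_disp_finite[OF T_iet])
  have "finite (\<Union>c\<in>carrier F. range (\<lambda>y. P (dl 0 c) y - y))"
    by (rule finite_UN_I[OF finK f1])
  then show ?thesis unfolding Dset_def using f2 by simp
qed

definition Sums :: "nat \<Rightarrow> real set" where
  "Sums k = (\<lambda>c. \<Sum>d\<in>Dset. real (c d) * d) ` PiE Dset (\<lambda>_. {..k})"

lemma Sums_zero: "0 \<in> Sums 0"
  unfolding Sums_def
proof (rule image_eqI[where x = "\<lambda>d\<in>Dset. 0::nat"])
  show "(0::real) = (\<Sum>d\<in>Dset. real ((\<lambda>d\<in>Dset. 0::nat) d) * d)" by simp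
  show "(\<lambda>d\<in>Dset. 0::nat) \<in> PiE Dset (\<lambda>_. {..0})" by simp
qed

lemma Sums_add:
  assumes "s \<in> Sums k" "d \<in> Dset"
  shows "d + s \<in> Sums (Suc k)"
proof -
  obtain c where c: "c \<in> PiE Dset (\<lambda>_. {..k})" "s = (\<Sum>d\<in>Dset. real (c d) * d)"
    using assms unfolding Sums_def by auto
  define c' where "c' = c(d := Suc (c d))"
  have c'P: "c' \<in> PiE Dset (\<lambda>_. {..Suc k})"
    unfolding PiE_iff
  proof
    show "\<forall>x\<in>Dset. c' x \<in> {..Suc k}"
    proof
      fix x assume "x \<in> Dset"
      then have "c x \<le> k" using c(1) by (auto simp: PiE_iff)
      then show "c' x \<in> {..Suc k}" unfolding c'_def by (cases "x = d") auto
    qed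
    have "c \<in> extensional Dset" using c(1) by (simp add: PiE_iff)
    then show "c' \<in> extensional Dset" unfolding c'_def using assms(2) by (simp add: extensional_def)
  qed
  have e1: "(\<Sum>d'\<in>Dset. real (c' d') * d') = (\<Sum>d'\<in>Dset. real (c d') * d' + (if d' = d then d' else 0))"
  proof (rule sum.cong)
    fix x assume "x \<in> Dset"
    show "real (c' x) * x = real (c x) * x + (if x = d then x else 0)"
    proof (cases "x = d")
      case True
      then have "c' x = Suc (c x)" unfolding c'_def by simp
      then show ?thesis using True by (simp add: distrib_right)
    next
      case False
      then have "c' x = c x" unfolding c'_def by simp
      then show ?thesis using False by simp
    qed
  qed simp
  have e2: "(\<Sum>d'\<in>Dset. real (c d') * d' + (if d' = d then d' else 0)) = (\<Sum>d'\<in>Dset. real (c d') * d') + (\<Sum>d'\<in>Dset. (if d' = d then d' else 0))"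
    by (rule sum.distrib)
  have e3: "(\<Sum>d'\<in>Dset. (if d' = d then d' else 0)) = d"
    using sum.delta[OF Dset_finite, of d "\<lambda>x. x"] assms(2) by simp
  have eq: "d + s = (\<Sum>d'\<in>Dset. real (c' d') * d')" using e1 e2 e3 c(2) by simp
  show ?thesis unfolding Sums_def
    by (rule image_eqI[where f = "\<lambda>c. \<Sum>d\<in>Dset. real (c d) * d", OF eq c'P])
qed

lemma Sums_card: "card (Sums k) \<le> (Suc k) ^ card Dset"
proof -
  have "card (Sums k) \<le> card (PiE Dset (\<lambda>_. {..k}))" unfolding Sums_def by (rule card_image_le) (intro finite_PiE Dset_finite, auto)
  also have "\<dots> = (Suc k) ^ card Dset" using Dset_finite by (simp add: card_PiE)
  finally show ?thesis .
qed

lemma Sums_finite: "finite (Sums k)"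
  unfolding Sums_def by (intro finite_imageI finite_PiE Dset_finite) auto

lemma word:
  "\<forall>h. (\<forall>i. h i \<in> carrier F) \<and> (\<forall>i. i < 0 \<or> int N \<le> i \<longrightarrow> h i = \<one>) \<longrightarrow> (\<forall>y. P h y - y \<in> Sums (3 * N))"
proof (induction N)
  case 0
  show ?case
  proof (intro allI impI)
    fix h y assume h: "(\<forall>i. h i \<in> carrier F) \<and> (\<forall>i. i < 0 \<or> int 0 \<le> i \<longrightarrow> h i = \<one>)"
    have "h = (\<lambda>i. \<one>)"
    proof
      fix i show "h i = \<one>" using h by (cases "i < 0") auto
    qed
    then show "P h y - y \<in> Sums (3 * 0)" using P_one Sums_zero by simp
  qed
next
  case (Suc N)
  show ?case
  proof (intro allI impI)
    fix h y assume h: "(\<forall>i. h i \<in> carrier F) \<and> (\<forall>i. i < 0 \<or> int (Suc N) \<le> i \<longrightarrow> h i = \<one>)"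
    define h' where "h' = (\<lambda>i. if i < 0 then \<one> else h (i + 1))"
    have h'p: "(\<forall>i. h' i \<in> carrier F) \<and> (\<forall>i. i < 0 \<or> int N \<le> i \<longrightarrow> h' i = \<one>)"
      using h unfolding h'_def by auto
    have finh': "finite {i. f i \<noteq> \<one>}" if "\<forall>i. i < 0 \<or> int M \<le> i \<longrightarrow> f i = \<one>" for f :: "int \<Rightarrow> 'a" and M
    proof -
      have "{i. f i \<noteq> \<one>} \<subseteq> {0..<int M}"
      proof
        fix i assume "i \<in> {i. f i \<noteq> \<one>}"
        then have "\<not> (i < 0 \<or> int M \<le> i)" using that by auto
        then show "i \<in> {0..<int M}" by auto
      qed
      then show ?thesis by (rule finite_subset) simp
    qed
    have W1: "(h', - 1) \<in> carrier (wreath_Z F)" using h'p finh'[where f = h' and M = N] unfolding carrierW by auto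
    have W2: "(\<lambda>i. h' (i - 1), 0) \<in> carrier (wreath_Z F)"
    proof -
      have "\<forall>i. i < 0 \<or> int (Suc N) \<le> i \<longrightarrow> h' (i - 1) = \<one>" using h'p by auto
      then show ?thesis using h'p finh'[where f = "\<lambda>i. h' (i - 1)" and M = "Suc N"] unfolding carrierW by auto
    qed
    have W3: "(h', 0) \<in> carrier (wreath_Z F)" using h'p finh'[where f = h' and M = N] unfolding carrierW by auto
    have h0: "h 0 \<in> carrier F" using h by auto
    have e1: "(h', 0) \<otimes>\<^bsub>wreath_Z F\<^esub> (\<lambda>i. \<one>, - 1) = (h', - 1)" using h'p by (auto simp: mulW)
    have e2: "(\<lambda>i. \<one>, 1) \<otimes>\<^bsub>wreath_Z F\<^esub> (h', - 1) = (\<lambda>i. h' (i - 1), 0)" using h'p by (auto simp: mulW)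
    have e3: "(dl 0 (h 0), 0) \<otimes>\<^bsub>wreath_Z F\<^esub> (\<lambda>i. h' (i - 1), 0) = (h, 0)"
    proof -
      have "(\<lambda>i. dl 0 (h 0) i \<otimes> h' (i - 1)) = h"
      proof
        fix i
        show "dl 0 (h 0) i \<otimes> h' (i - 1) = h i"
        proof (cases "i = 0")
          case True then show ?thesis using h0 unfolding dl_def h'_def by simp
        next
          case False
          have hi: "h i \<in> carrier F" using h by auto
          show ?thesis
          proof (cases "i < 0")
            case True then show ?thesis using False h unfolding dl_def h'_def by auto
          next
            case False2: False
            then show ?thesis using False hi unfolding dl_def h'_def by auto
          qed
        qed
      qed
      then show ?thesis by (simp add: mulW)
    qed
    define z1 where "z1 = T (-1) y"
    define z2 where "z2 = P h' z1"
    define z3 where "z3 = T 1 z2"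
    have "phi (h', - 1) = P h' \<circ> T (-1)"
      using phi_mult[OF W3 T_W, of "-1"] e1 unfolding P_def T_def by simp
    moreover have "phi (\<lambda>i. h' (i - 1), 0) = T 1 \<circ> phi (h', - 1)"
      using phi_mult[OF T_W W1, of 1] e2 unfolding T_def by simp
    moreover have "P h = P (dl 0 (h 0)) \<circ> phi (\<lambda>i. h' (i - 1), 0)"
      using phi_mult[OF dl_W[OF h0] W2, of 0 0] e3 unfolding P_def by simp
    ultimately have Ph: "P h y = P (dl 0 (h 0)) z3" unfolding z1_def z2_def z3_def by simp
    have d1: "P (dl 0 (h 0)) z3 - z3 \<in> Dset" unfolding Dset_def using h0 by blast
    have d2: "T 1 z2 - z2 \<in> Dset" unfolding Dset_def by blast
    have d3: "T (-1) y - y \<in> Dset" unfolding Dset_def by blast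
    have s: "z2 - z1 \<in> Sums (3 * N)" using Suc.IH h'p unfolding z2_def by blast
    have X: "P h y - y = (P (dl 0 (h 0)) z3 - z3) + ((T 1 z2 - z2) + ((T (-1) y - y) + (z2 - z1)))"
      using Ph unfolding z3_def z1_def by simp
    have Y: "(P (dl 0 (h 0)) z3 - z3) + ((T 1 z2 - z2) + ((T (-1) y - y) + (z2 - z1))) \<in> Sums (Suc (Suc (Suc (3 * N))))"
      by (intro Sums_add d1 d2 d3 s)
    have Z: "Suc (Suc (Suc (3 * N))) = 3 * Suc N" by simp
    show "P h y - y \<in> Sums (3 * Suc N)" unfolding X Z[symmetric] by (rule Y)
  qed
qed

lemma upper:
  assumes "E \<subseteq> {0..<int N}"
  shows "card (Om x E) \<le> (Suc (3 * N)) ^ card Dset"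
proof -
  have "Om x E \<subseteq> (\<lambda>s. x + s) ` Sums (3 * N)"
  proof
    fix z assume "z \<in> Om x E"
    then obtain h where h: "h \<in> VJ E" "z = P h x" unfolding Om_def by auto
    have "(\<forall>i. h i \<in> carrier F) \<and> (\<forall>i. i < 0 \<or> int N \<le> i \<longrightarrow> h i = \<one>)"
      using h assms unfolding VJ_def by auto
    then have "z - x \<in> Sums (3 * N)" using word[of N] h by blast
    then show "z \<in> (\<lambda>s. x + s) ` Sums (3 * N)" by (rule rev_image_eqI) simp
  qed
  then have "card (Om x E) \<le> card ((\<lambda>s. x + s) ` Sums (3 * N))"
    by (rule card_mono[rotated]) (simp add: Sums_finite)
  also have "\<dots> \<le> card (Sums (3 * N))" by (rule card_image_le) (simp add: Sums_finite)
  also have "\<dots> \<le> (Suc (3 * N)) ^ card Dset" by (rule Sums_card)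
  finally show ?thesis .
qed

end


context emb begin

lemma contradiction:
  assumes a: "a \<in> carrier F" and b: "b \<in> carrier F" and nab: "a \<otimes> b \<noteq> b \<otimes> a"
  shows False
proof -
  define w where "w = inv (b \<otimes> a) \<otimes> (a \<otimes> b)"
  have ab: "a \<otimes> b \<in> carrier F" and ba: "b \<otimes> a \<in> carrier F" using a b by auto
  have ibaC: "inv (b \<otimes> a) \<in> carrier F" using ba by auto
  have wC: "w \<in> carrier F" unfolding w_def using ab ba by auto
  have w1: "w \<noteq> \<one>"
  proof
    assume "w = \<one>"
    then have "inv (a \<otimes> b) = inv (b \<otimes> a)"
      using inv_equality[OF _ ab ibaC] unfolding w_def by simp
    then have "inv (inv (a \<otimes> b)) = inv (inv (b \<otimes> a))" by simp
    then show False using nab ab ba by simp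
  qed
  define s where "s = P (dl 0 w)"
  have s_iet: "iet_map s" unfolding s_def P_def by (rule phi_iet[OF dl_W[OF wC]])
  have s_ne: "s \<noteq> id"
  proof
    assume "s = id"
    then have "phi (dl 0 w, 0) = phi (\<lambda>i. \<one>, 0)" using P_one unfolding s_def P_def by simp
    then have "(dl 0 w, 0) = ((\<lambda>i. \<one>, 0) :: (int \<Rightarrow> 'a) \<times> int)"
      using inj dl_W[OF wC] T_W unfolding inj_on_def by blast
    then have "dl 0 w 0 = \<one>" by (metis fst_conv)
    then show False using w1 unfolding dl_def by simp
  qed
  obtain p q where pq: "0 \<le> p" "p < q" "q \<le> 1" and sm: "\<forall>y\<in>{p<..<q}. s y \<noteq> y"
    using iet_nonid[OF s_iet s_ne] by blast
  have ncy: "P (dl 0 a) (P (dl 0 b) y) \<noteq> P (dl 0 b) (P (dl 0 a) y)" if y: "y \<in> {p<..<q}" for y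
  proof
    assume eq: "P (dl 0 a) (P (dl 0 b) y) = P (dl 0 b) (P (dl 0 a) y)"
    have "s y = P (dl 0 (inv (b \<otimes> a))) (P (dl 0 (a \<otimes> b)) y)"
      unfolding s_def w_def using P_dl_mult[OF ibaC ab] by simp
    also have "P (dl 0 (a \<otimes> b)) y = P (dl 0 (b \<otimes> a)) y"
      using eq P_dl_mult[OF a b] P_dl_mult[OF b a] by simp
    also have "P (dl 0 (inv (b \<otimes> a))) (P (dl 0 (b \<otimes> a)) y) = P (dl 0 (inv (b \<otimes> a) \<otimes> (b \<otimes> a))) y"
      using P_dl_mult[OF ibaC ba] by simp
    also have "inv (b \<otimes> a) \<otimes> (b \<otimes> a) = \<one>" using ba by simp
    also have "dl 0 \<one> = (\<lambda>i. \<one>)" unfolding dl_def by simp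
    finally have "s y = y" using P_one by simp
    then show False using sm y by blast
  qed
  define l where "l = q - p"
  have l0: "0 < l" unfolding l_def using pq by simp
  have "\<forall>n::nat. \<exists>B. B \<in> sets lborel \<and> B \<subseteq> {0..<1} \<and> (\<forall>x\<in>B. T (- int n) x \<in> {p<..<q}) \<and>
             ennreal l \<le> emeasure lborel B"
    using iet_meas[OF T_iet pq] unfolding l_def by blast
  then obtain Bf where Bf: "\<And>n. Bf n \<in> sets lborel \<and> Bf n \<subseteq> {0..<1} \<and> (\<forall>x\<in>Bf n. T (- int n) x \<in> {p<..<q}) \<and>
             ennreal l \<le> emeasure lborel (Bf n)"
    by metis
  define d where "d = card Dset"
  have lim: "((\<lambda>j::nat. (3*((real j^2+1)/l + 1) + 1)^d / 2^j) \<longlonglongrightarrow> 0)"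
    using l0 by real_asymp
  have "eventually (\<lambda>j. (3*((real j^2+1)/l + 1) + 1)^d / 2^j < 1) sequentially"
    by (rule order_tendstoD(2)[OF lim]) simp
  then obtain j where jlt: "(3*((real j^2+1)/l + 1) + 1)^d / 2^j < 1"
    unfolding eventually_sequentially by blast
  have jlt2: "(3*((real j^2+1)/l + 1) + 1)^d < 2^j" using jlt by (simp add: divide_less_eq)
  define N where "N = nat \<lceil>(real j^2 + 1) / l\<rceil>"
  have N1: "(real j^2 + 1) / l \<le> real N" unfolding N_def by linarith
  have N2: "real N \<le> (real j^2 + 1) / l + 1"
  proof -
    have "0 \<le> (real j^2 + 1) / l" using l0 by simp
    then show ?thesis unfolding N_def by linarith
  qed
  have kN: "real (j^2) < real N * l"
  proof -
    have "real j^2 + 1 \<le> real N * l" using N1 l0 by (simp add: divide_le_eq)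
    then show ?thesis by simp
  qed
  have bound: "(Suc (3 * N)) ^ d < 2 ^ j"
  proof -
    have r: "real (Suc (3 * N)) = 3 * real N + 1" by simp
    have "real (Suc (3 * N)) \<le> 3*((real j^2+1)/l + 1) + 1" unfolding r
      by (rule add_right_mono, rule mult_left_mono[OF N2]) simp
    then have "real (Suc (3 * N)) ^ d \<le> (3*((real j^2+1)/l + 1) + 1) ^ d"
      by (rule power_mono) simp
    then have "real (Suc (3 * N)) ^ d < 2 ^ j" using jlt2 by linarith
    then have "real (Suc (3 * N) ^ d) < real (2 ^ j)" by simp
    then show ?thesis by (simp only: of_nat_less_iff)
  qed
  obtain x where x: "j^2 < card {n. n < N \<and> x \<in> Bf n}"
    using averaging[of Bf l "j^2" N] Bf kN by blast
  define G where "G = int ` {n. n < N \<and> x \<in> Bf n}"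
  have finG: "finite G" unfolding G_def by simp
  have cardG: "card G = card {n. n < N \<and> x \<in> Bf n}" unfolding G_def
    by (rule card_image) (simp add: inj_on_def)
  have GN: "G \<subseteq> {0..<int N}" unfolding G_def by auto
  have nc: "\<forall>m\<in>G. P (dl m a) (P (dl m b) x) \<noteq> P (dl m b) (P (dl m a) x)"
  proof
    fix m assume "m \<in> G"
    then obtain n where n: "m = int n" "x \<in> Bf n" unfolding G_def by auto
    define y where "y = T (- m) x"
    have yin: "y \<in> {p<..<q}" using Bf[of n] n unfolding y_def by auto
    have e1: "P (dl m a) (P (dl m b) x) = T m (P (dl 0 a) (P (dl 0 b) y))"
      using P_conj[OF a, of m] P_conj[OF b, of m] T_inv[of m] unfolding y_def by simp
    have e2: "P (dl m b) (P (dl m a) x) = T m (P (dl 0 b) (P (dl 0 a) y))"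
      using P_conj[OF a, of m] P_conj[OF b, of m] T_inv[of m] unfolding y_def by simp
    show "P (dl m a) (P (dl m b) x) \<noteq> P (dl m b) (P (dl m a) x)"
    proof
      assume "P (dl m a) (P (dl m b) x) = P (dl m b) (P (dl m a) x)"
      then have "T (- m) (T m (P (dl 0 a) (P (dl 0 b) y))) = T (- m) (T m (P (dl 0 b) (P (dl 0 a) y)))"
        using e1 e2 by simp
      then have "P (dl 0 a) (P (dl 0 b) y) = P (dl 0 b) (P (dl 0 a) y)" using T_inv by simp
      then show False using ncy[OF yin] by simp
    qed
  qed
  have "2 ^ j \<le> card (Om x G)"
    by (rule growth[OF a b nc finG]) (use x cardG in auto)
  moreover have "card (Om x G) \<le> (Suc (3 * N)) ^ card Dset" by (rule upper[OF GN])
  ultimately show False using bound unfolding d_def by simp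
qed

end

theorem mainTheorem3:
  fixes F :: "('a, 'b) monoid_scheme"
  assumes "group F" and "finite (carrier F)" and "\<not> comm_group F"
  shows "\<not> (\<exists>\<phi>. \<phi> \<in> hom (wreath_Z F) IET \<and> inj_on \<phi> (carrier (wreath_Z F)))"
proof
  assume "\<exists>\<phi>. \<phi> \<in> hom (wreath_Z F) IET \<and> inj_on \<phi> (carrier (wreath_Z F))"
  then obtain phi where phi: "phi \<in> hom (wreath_Z F) IET" "inj_on phi (carrier (wreath_Z F))" by blast
  have E: "emb F phi" unfolding emb_def emb_axioms_def using assms phi by auto
  obtain a b where ab: "a \<in> carrier F" "b \<in> carrier F" "a \<otimes>\<^bsub>F\<^esub> b \<noteq> b \<otimes>\<^bsub>F\<^esub> a"
    using group.group_comm_groupI[OF assms(1)] assms(3) by blast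
  show False by (rule emb.contradiction[OF E ab])
qed


end
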